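(* Let $\mathcal{L}$ be a triangulation of a closed 3-manifold $\mathcal{M}^3$ with a branching structure, and consider three copies $i=1,2,3$ of the $\mathbb{Z}_2$ toric code on $\mathcal{L}$ as described in the context. Define the constant-depth circuit $$U=\prod_{[v_0v_1v_2v_3]\in\mathcal{L}}\mathrm{CCZ}\big(q^{(1)}_{[v_0v_1]},\,q^{(2)}_{[v_1v_2]},\,q^{(3)}_{[v_2v_3]}\big)=(-1)^{\int_{\mathcal{L}}a^{(1)}\cup a^{(2)}\cup a^{(3)}},$$ the product over all 3-simplices with $v_0\prec v_1\prec v_2\prec v_3$. Then $U$ preserves the code space, and on the code space $$U=\prod_{\alpha^1,\beta^1,\gamma^1\in B^1}\overline{\mathrm{CCZ}}\big[(\alpha^1;1),(\beta^1;2),(\gamma^1;3)\big]^{\int_{\mathcal{M}^3}\alpha^1\cup\beta^1\cup\gamma^1},$$ i.e. a logical CCZ acts on $(\alpha^1;1),(\beta^1;2),(\gamma^1;3)$ exactly when the Poincaré-dual 2-cycles have $\mathbb{Z}_2$ triple intersection number $1$.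
   Context: Branching structure: an ordering $v_0\prec v_1\prec\cdots$ of the vertices of each simplex, consistent on shared faces. Toric code copy $i$: one qubit $q^{(i)}_e$ per edge $e$; $X$-stabilizers $\prod_{e\ni v}X^{(i)}_e$ for each vertex $v$; $Z$-stabilizers $\prod_{e\subset f}Z^{(i)}_e$ for each triangle $f$. The operator-valued 1-cochain $a^{(i)}$ with values in $\{0,1\}$ is defined by $(-1)^{a^{(i)}(e)}=Z^{(i)}_e$; the cup product of cochains on an ordered simplex is $(\alpha^p\cup\beta^q)([v_0\cdots v_{p+q}])=\alpha^p([v_0\cdots v_p])\beta^q([v_p\cdots v_{p+q}])$, and $\int_{\mathcal{L}}$ is the sum over all 3-simplices mod 2. On the code space $da^{(i)}=0$, and the class of $a^{(i)}$ in $H^1(\mathcal{M}^3;\mathbb{Z}_2)$ is measured by logical $Z$ operators. Fix a basis $B^1$ of $H^1(\mathcal{M}^3;\mathbb{Z}_2)$; writing $[a^{(1)}]=\sum_\alpha n_\alpha\alpha^1$, $[a^{(2)}]=\sum_\beta m_\beta\beta^1$, $[a^{(3)}]=\sum_\gamma l_\gamma\gamma^1$ with $n_\alpha,m_\beta,l_\gamma\in\{0,1\}$, the logical qubit $(\alpha^1;1)$ has logical computational basis value $n_\alpha$ (similarly for $(\beta^1;2),(\gamma^1;3)$), and $\overline{\mathrm{CCZ}}[(\alpha^1;1),(\beta^1;2),(\gamma^1;3)]$ acts as $(-1)^{n_\alpha m_\beta l_\gamma}$. *)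

theory Defs
  imports Complex_Main "HOL-Library.Z2"
begin

text \<open>A triangulation is given by its (finite) set T of 3-simplices, each a 4-element
vertex set; the complex consists of all faces of these tetrahedra.\<close>

definition cedges :: "'v set set \<Rightarrow> 'v set set" where
  "cedges T = {e. \<exists>t\<in>T. e \<subseteq> t \<and> card e = 2}"

definition ctris :: "'v set set \<Rightarrow> 'v set set" where
  "ctris T = {f. \<exists>t\<in>T. f \<subseteq> t \<and> card f = 3}"

definition bdry_edges :: "'v set \<Rightarrow> 'v set set" where
  "bdry_edges f = {e. e \<subseteq> f \<and> card e = 2}"

definition graph_connected :: "'v set \<Rightarrow> 'v set set \<Rightarrow> bool" where
  "graph_connected V Es = (\<forall>x\<in>V. \<forall>y\<in>V. (\<lambda>u w. {u, w} \<in> Es)\<^sup>*\<^sup>* x y)"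

definition sedges :: "'v set set \<Rightarrow> 'v set set" where
  "sedges S = {e. \<exists>s\<in>S. e \<subseteq> s \<and> card e = 2}"

definition vlink2 :: "'v set set \<Rightarrow> 'v \<Rightarrow> 'v set set" where
  "vlink2 S w = {s - {w} | s. s \<in> S \<and> w \<in> s}"

text \<open>A triangulated 2-sphere: a closed connected combinatorial surface (every edge in exactly
two triangles, every vertex link a single cycle) of Euler characteristic 2.\<close>
definition is_2sphere :: "'v set set \<Rightarrow> bool" where
  "is_2sphere S \<longleftrightarrow> finite S \<and> S \<noteq> {} \<and> (\<forall>s\<in>S. card s = 3)
     \<and> (\<forall>e\<in>sedges S. card {s\<in>S. e \<subseteq> s} = 2)
     \<and> (\<forall>w\<in>\<Union>S. graph_connected (\<Union>(vlink2 S w)) (vlink2 S w))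
     \<and> graph_connected (\<Union>S) (sedges S)
     \<and> int (card (\<Union>S)) - int (card (sedges S)) + int (card S) = 2"

definition vlink3 :: "'v set set \<Rightarrow> 'v \<Rightarrow> 'v set set" where
  "vlink3 T v = {t - {v} | t. t \<in> T \<and> v \<in> t}"

text \<open>Triangulation of a closed 3-manifold (combinatorial characterisation: every vertex link
is a triangulated 2-sphere).\<close>
definition closed_3mfd_triangulation :: "'v set set \<Rightarrow> bool" where
  "closed_3mfd_triangulation T \<longleftrightarrow> finite T \<and> T \<noteq> {} \<and> (\<forall>t\<in>T. card t = 4)
     \<and> (\<forall>v\<in>\<Union>T. is_2sphere (vlink3 T v))"

text \<open>Branching structure: a relation that orders the vertices of every simplex totally;
being a single relation on vertex pairs, it is automatically consistent on shared faces.\<close>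
definition branching :: "'v set set \<Rightarrow> ('v \<Rightarrow> 'v \<Rightarrow> bool) \<Rightarrow> bool" where
  "branching T prec \<longleftrightarrow> (\<forall>u w. prec u w \<longrightarrow> \<not> prec w u)
     \<and> (\<forall>t\<in>T. \<forall>u\<in>t. \<forall>w\<in>t. u \<noteq> w \<longrightarrow> prec u w \<or> prec w u)
     \<and> (\<forall>t\<in>T. \<forall>x\<in>t. \<forall>y\<in>t. \<forall>z\<in>t. prec x y \<longrightarrow> prec y z \<longrightarrow> prec x z)"

definition vtx :: "('v \<Rightarrow> 'v \<Rightarrow> bool) \<Rightarrow> 'v set \<Rightarrow> nat \<Rightarrow> 'v" where
  "vtx prec t i = (THE v. v \<in> t \<and> card {w\<in>t. prec w v} = i)"

type_synonym 'v cochain1 = "'v set \<Rightarrow> bit"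

definition is_cochain1 :: "'v set set \<Rightarrow> 'v cochain1 \<Rightarrow> bool" where
  "is_cochain1 T c \<longleftrightarrow> (\<forall>e. e \<notin> cedges T \<longrightarrow> c e = 0)"

definition cocycle1 :: "'v set set \<Rightarrow> 'v cochain1 \<Rightarrow> bool" where
  "cocycle1 T c \<longleftrightarrow> is_cochain1 T c \<and> (\<forall>f\<in>ctris T. (\<Sum>e\<in>bdry_edges f. c e) = 0)"

definition cohomologous :: "'v set set \<Rightarrow> 'v cochain1 \<Rightarrow> 'v cochain1 \<Rightarrow> bool" where
  "cohomologous T c d \<longleftrightarrow> (\<exists>g :: 'v \<Rightarrow> bit. \<forall>e\<in>cedges T. c e - d e = (\<Sum>v\<in>e. g v))"

definition cup3_int :: "'v set set \<Rightarrow> ('v \<Rightarrow> 'v \<Rightarrow> bool) \<Rightarrow> 'v cochain1 \<Rightarrow> 'v cochain1 \<Rightarrow> 'v cochain1 \<Rightarrow> bit" where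
  "cup3_int T prec x y z = (\<Sum>t\<in>T. x {vtx prec t 0, vtx prec t 1} * y {vtx prec t 1, vtx prec t 2}
                                     * z {vtx prec t 2, vtx prec t 3})"

definition lincomb :: "'v cochain1 set \<Rightarrow> ('v cochain1 \<Rightarrow> bit) \<Rightarrow> 'v cochain1" where
  "lincomb B n = (\<lambda>e. \<Sum>\<alpha>\<in>B. n \<alpha> * \<alpha> e)"

text \<open>B is a set of cocycles whose classes form a basis of H^1(M;Z2): every cocycle is
cohomologous to a unique linear combination of elements of B.\<close>
definition coh_basis :: "'v set set \<Rightarrow> 'v cochain1 set \<Rightarrow> bool" where
  "coh_basis T B \<longleftrightarrow> finite B \<and> (\<forall>\<alpha>\<in>B. cocycle1 T \<alpha>)
     \<and> (\<forall>c. cocycle1 T c \<longrightarrow> (\<exists>!n. (\<forall>x. x \<notin> B \<longrightarrow> n x = 0) \<and> cohomologous T c (lincomb B n)))"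

definition coeff :: "'v set set \<Rightarrow> 'v cochain1 set \<Rightarrow> 'v cochain1 \<Rightarrow> 'v cochain1 \<Rightarrow> bit" where
  "coeff T B c \<alpha> = (THE n. (\<forall>x. x \<notin> B \<longrightarrow> n x = 0) \<and> cohomologous T c (lincomb B n)) \<alpha>"

text \<open>Computational (Z-)basis configurations: a i e is the value of qubit q^(i)_e, i.e.
Z^(i)_e = (-1)^(a i e). States are complex amplitude functions on valid configurations.\<close>
type_synonym 'v cfg = "nat \<Rightarrow> 'v cochain1"

definition valid_cfg :: "'v set set \<Rightarrow> 'v cfg \<Rightarrow> bool" where
  "valid_cfg T a \<longleftrightarrow> (\<forall>i e. i \<notin> {1,2,3} \<or> e \<notin> cedges T \<longrightarrow> a i e = 0)"

definition hilb :: "'v set set \<Rightarrow> ('v cfg \<Rightarrow> complex) set" where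
  "hilb T = {\<psi>. \<forall>a. \<not> valid_cfg T a \<longrightarrow> \<psi> a = 0}"

definition sgnb :: "bit \<Rightarrow> complex" where
  "sgnb b = (if b = 0 then 1 else -1)"

definition Xstab :: "'v set set \<Rightarrow> nat \<Rightarrow> 'v \<Rightarrow> ('v cfg \<Rightarrow> complex) \<Rightarrow> ('v cfg \<Rightarrow> complex)" where
  "Xstab T i v \<psi> = (\<lambda>a. \<psi> (a(i := (\<lambda>e. if e \<in> cedges T \<and> v \<in> e then a i e + 1 else a i e))))"

definition Zstab :: "nat \<Rightarrow> 'v set \<Rightarrow> ('v cfg \<Rightarrow> complex) \<Rightarrow> ('v cfg \<Rightarrow> complex)" where
  "Zstab i f \<psi> = (\<lambda>a. sgnb (\<Sum>e\<in>bdry_edges f. a i e) * \<psi> a)"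

definition code_space :: "'v set set \<Rightarrow> ('v cfg \<Rightarrow> complex) set" where
  "code_space T = {\<psi>\<in>hilb T. (\<forall>i\<in>{1,2,3}. \<forall>v\<in>\<Union>T. Xstab T i v \<psi> = \<psi>)
                            \<and> (\<forall>i\<in>{1,2,3}. \<forall>f\<in>ctris T. Zstab i f \<psi> = \<psi>)}"

definition CCZ_phys :: "nat \<times> 'v set \<Rightarrow> nat \<times> 'v set \<Rightarrow> nat \<times> 'v set \<Rightarrow> ('v cfg \<Rightarrow> complex) \<Rightarrow> ('v cfg \<Rightarrow> complex)" where
  "CCZ_phys q1 q2 q3 \<psi> = (\<lambda>a. sgnb (a (fst q1) (snd q1) * a (fst q2) (snd q2) * a (fst q3) (snd q3)) * \<psi> a)"

text \<open>The circuit U: product over all tetrahedra of the (commuting, diagonal) physical CCZ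
gates; written as the product of their phases.\<close>
definition U_circ :: "'v set set \<Rightarrow> ('v \<Rightarrow> 'v \<Rightarrow> bool) \<Rightarrow> ('v cfg \<Rightarrow> complex) \<Rightarrow> ('v cfg \<Rightarrow> complex)" where
  "U_circ T prec \<psi> = (\<lambda>a. (\<Prod>t\<in>T. sgnb (a 1 {vtx prec t 0, vtx prec t 1} * a 2 {vtx prec t 1, vtx prec t 2}
                                            * a 3 {vtx prec t 2, vtx prec t 3})) * \<psi> a)"

definition logical_CCZ_phase :: "'v set set \<Rightarrow> 'v cochain1 set \<Rightarrow> 'v cochain1 \<Rightarrow> 'v cochain1 \<Rightarrow> 'v cochain1 \<Rightarrow> 'v cfg \<Rightarrow> complex" where
  "logical_CCZ_phase T B \<alpha> \<beta> \<gamma> a = sgnb (coeff T B (a 1) \<alpha> * coeff T B (a 2) \<beta> * coeff T B (a 3) \<gamma>)"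

definition logical_CCZ :: "'v set set \<Rightarrow> 'v cochain1 set \<Rightarrow> 'v cochain1 \<Rightarrow> 'v cochain1 \<Rightarrow> 'v cochain1 \<Rightarrow> ('v cfg \<Rightarrow> complex) \<Rightarrow> ('v cfg \<Rightarrow> complex)" where
  "logical_CCZ T B \<alpha> \<beta> \<gamma> \<psi> = (\<lambda>a. logical_CCZ_phase T B \<alpha> \<beta> \<gamma> a * \<psi> a)"

definition bit_nat :: "bit \<Rightarrow> nat" where
  "bit_nat b = (if b = 0 then 0 else 1)"

text \<open>The product over alpha,beta,gamma in B of logical CCZ raised to the power
\<open>\<integral> alpha \<union> beta \<union> gamma\<close> (commuting diagonal operators: product of phases).\<close>
definition logical_product :: "'v set set \<Rightarrow> ('v \<Rightarrow> 'v \<Rightarrow> bool) \<Rightarrow> 'v cochain1 set \<Rightarrow> ('v cfg \<Rightarrow> complex) \<Rightarrow> ('v cfg \<Rightarrow> complex)" where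
  "logical_product T prec B \<psi> = (\<lambda>a. (\<Prod>\<alpha>\<in>B. \<Prod>\<beta>\<in>B. \<Prod>\<gamma>\<in>B.
        logical_CCZ_phase T B \<alpha> \<beta> \<gamma> a ^ bit_nat (cup3_int T prec \<alpha> \<beta> \<gamma>)) * \<psi> a)"

end

theory Submission
  imports Defs
begin

lemma br_asym: "branching T prec \<Longrightarrow> prec u w \<Longrightarrow> \<not> prec w u"
  unfolding branching_def by (elim conjE) (erule allE, erule allE, erule mp)
lemma branching_irrefl: "branching T prec \<Longrightarrow> \<not> prec u u"
  using br_asym by metis
lemma br_tot: "branching T prec \<Longrightarrow> t \<in> T \<Longrightarrow> u \<in> t \<Longrightarrow> w \<in> t \<Longrightarrow> u \<noteq> w \<Longrightarrow> prec u w \<or> prec w u"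
  unfolding branching_def by metis
lemma br_trans: "branching T prec \<Longrightarrow> t \<in> T \<Longrightarrow> x \<in> t \<Longrightarrow> y \<in> t \<Longrightarrow> z \<in> t \<Longrightarrow> prec x y \<Longrightarrow> prec y z \<Longrightarrow> prec x z"
  unfolding branching_def by metis

lemma vtx_chain:
  assumes br: "branching T prec" and tT: "t \<in> T" and c4: "card t = 4"
  shows "t = {vtx prec t 0, vtx prec t 1, vtx prec t 2, vtx prec t 3}
    \<and> distinct [vtx prec t 0, vtx prec t 1, vtx prec t 2, vtx prec t 3]
    \<and> prec (vtx prec t 0) (vtx prec t 1) \<and> prec (vtx prec t 0) (vtx prec t 2)
    \<and> prec (vtx prec t 0) (vtx prec t 3) \<and> prec (vtx prec t 1) (vtx prec t 2)
    \<and> prec (vtx prec t 1) (vtx prec t 3) \<and> prec (vtx prec t 2) (vtx prec t 3)"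
proof -
  define r where "r v = card {w\<in>t. prec w v}" for v
  have fin: "finite t" using c4 by (metis card.infinite zero_neq_numeral)
  have irr: "\<And>u. \<not> prec u u" using br branching_irrefl by metis
  have tot: "\<And>u w. u \<in> t \<Longrightarrow> w \<in> t \<Longrightarrow> u \<noteq> w \<Longrightarrow> prec u w \<or> prec w u"
    using br tT br_tot by metis
  have tr: "\<And>x y z. x \<in> t \<Longrightarrow> y \<in> t \<Longrightarrow> z \<in> t \<Longrightarrow> prec x y \<Longrightarrow> prec y z \<Longrightarrow> prec x z"
    using br tT br_trans by metis
  have rlt: "r v < 4" if "v \<in> t" for v
  proof -
    have "{w\<in>t. prec w v} \<subset> t" using that irr by blast
    then have "card {w\<in>t. prec w v} < card t" using fin by (rule psubset_card_mono[rotated])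
    then show ?thesis unfolding r_def c4 .
  qed
  have rmono: "r u < r v" if "u \<in> t" "v \<in> t" "prec u v" for u v
  proof -
    have "{w\<in>t. prec w u} \<subset> {w\<in>t. prec w v}" using that irr tr by blast
    moreover have "finite {w\<in>t. prec w v}" using fin by simp
    ultimately show ?thesis unfolding r_def by (rule psubset_card_mono[rotated])
  qed
  have rne: "r u \<noteq> r v" if "u \<in> t" "v \<in> t" "u \<noteq> v" for u v
  proof -
    have "prec u v \<or> prec v u" using tot that by blast
    then show ?thesis using rmono that by fastforce
  qed
  have inj: "inj_on r t"
    by (rule inj_onI) (use rne in blast)
  have img: "r ` t = {..<4}"
  proof (rule card_subset_eq)
    show "finite {..<(4::nat)}" by simp
    show "r ` t \<subseteq> {..<4}" using rlt by auto
    show "card (r ` t) = card {..<(4::nat)}" using card_image[OF inj] c4 by simp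
  qed
  have ex: "\<exists>!v. v \<in> t \<and> r v = i" if "i < 4" for i
  proof -
    have "i \<in> r ` t" using img that by auto
    then obtain v where v: "v \<in> t" "r v = i" by auto
    show ?thesis
    proof (rule ex1I[of _ v])
      show "v \<in> t \<and> r v = i" using v by blast
      fix w assume "w \<in> t \<and> r w = i"
      then show "w = v" using v rne by blast
    qed
  qed
  have vt: "vtx prec t i \<in> t \<and> r (vtx prec t i) = i" if "i < 4" for i
  proof -
    have "vtx prec t i = (THE v. v \<in> t \<and> r v = i)" unfolding vtx_def r_def by simp
    then show ?thesis using theI'[OF ex[OF that]] by simp
  qed
  have pr: "prec (vtx prec t i) (vtx prec t j)" if "i < j" "j < 4" for i j
  proof -
    have a: "vtx prec t i \<in> t" "r (vtx prec t i) = i" using vt that by auto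
    have b: "vtx prec t j \<in> t" "r (vtx prec t j) = j" using vt that by auto
    have "vtx prec t i \<noteq> vtx prec t j" using a b that by auto
    then have "prec (vtx prec t i) (vtx prec t j) \<or> prec (vtx prec t j) (vtx prec t i)"
      using tot a b by blast
    moreover have "\<not> prec (vtx prec t j) (vtx prec t i)"
    proof
      assume "prec (vtx prec t j) (vtx prec t i)"
      then have "r (vtx prec t j) < r (vtx prec t i)" using rmono a b by blast
      then show False using a b that by simp
    qed
    ultimately show ?thesis by blast
  qed
  have cov: "x \<in> {vtx prec t 0, vtx prec t 1, vtx prec t 2, vtx prec t 3}" if "x \<in> t" for x
  proof -
    have lt: "r x < 4" using rlt that by auto
    have "x = vtx prec t (r x)"
    proof -
      have "vtx prec t (r x) \<in> t \<and> r (vtx prec t (r x)) = r x" using vt lt by blast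
      then show ?thesis using rne that by metis
    qed
    moreover have "r x = 0 \<or> r x = 1 \<or> r x = 2 \<or> r x = 3" using lt by auto
    ultimately show ?thesis by auto
  qed
  have sub: "{vtx prec t 0, vtx prec t 1, vtx prec t 2, vtx prec t 3} \<subseteq> t"
    using vt[of 0] vt[of 1] vt[of 2] vt[of 3] by simp
  have "t = {vtx prec t 0, vtx prec t 1, vtx prec t 2, vtx prec t 3}"
    using cov sub by blast
  moreover have p: "prec (vtx prec t 0) (vtx prec t 1)" "prec (vtx prec t 0) (vtx prec t 2)"
    "prec (vtx prec t 0) (vtx prec t 3)" "prec (vtx prec t 1) (vtx prec t 2)"
    "prec (vtx prec t 1) (vtx prec t 3)" "prec (vtx prec t 2) (vtx prec t 3)"
    using pr by auto
  moreover have "distinct [vtx prec t 0, vtx prec t 1, vtx prec t 2, vtx prec t 3]"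
    using p irr by (auto simp del: One_nat_def)
  ultimately show ?thesis by blast
qed

lemma tri_two:
  assumes cl: "closed_3mfd_triangulation T" and f: "f \<in> ctris T"
  shows "card {t\<in>T. f \<subseteq> t} = 2"
proof -
  obtain t0 where t0: "t0 \<in> T" "f \<subseteq> t0" and c3: "card f = 3" using f unfolding ctris_def by blast
  have "f \<noteq> {}" using c3 by (metis card.empty zero_neq_numeral)
  then obtain u where uf: "u \<in> f" by blast
  have uT: "u \<in> \<Union>T" using t0 uf by blast
  have sph: "is_2sphere (vlink3 T u)" using cl uT unfolding closed_3mfd_triangulation_def by blast
  define e where "e = f - {u}"
  have fin: "finite f" using c3 by (metis card.infinite zero_neq_numeral)
  have ce: "card e = 2" unfolding e_def using c3 uf fin by simp
  have s0: "t0 - {u} \<in> vlink3 T u" unfolding vlink3_def using t0 uf by blast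
  have s1: "e \<subseteq> t0 - {u}" unfolding e_def using t0 by blast
  have es: "e \<in> sedges (vlink3 T u)"
    unfolding sedges_def using s0 s1 ce by blast
  have c2: "card {s\<in>vlink3 T u. e \<subseteq> s} = 2"
    using sph es unfolding is_2sphere_def by blast
  have "bij_betw (\<lambda>t. t - {u}) {t\<in>T. f \<subseteq> t} {s\<in>vlink3 T u. e \<subseteq> s}"
  proof (rule bij_betw_imageI)
    show "inj_on (\<lambda>t. t - {u}) {t\<in>T. f \<subseteq> t}"
    proof (rule inj_onI)
      fix x y assume "x \<in> {t\<in>T. f \<subseteq> t}" "y \<in> {t\<in>T. f \<subseteq> t}" "x - {u} = y - {u}"
      then have "u \<in> x" "u \<in> y" using uf by auto
      then show "x = y" using \<open>x - {u} = y - {u}\<close> by (metis insert_Diff)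
    qed
    show "(\<lambda>t. t - {u}) ` {t\<in>T. f \<subseteq> t} = {s\<in>vlink3 T u. e \<subseteq> s}"
    proof
      show "(\<lambda>t. t - {u}) ` {t\<in>T. f \<subseteq> t} \<subseteq> {s\<in>vlink3 T u. e \<subseteq> s}"
      proof
        fix s assume "s \<in> (\<lambda>t. t - {u}) ` {t\<in>T. f \<subseteq> t}"
        then obtain t where t: "t \<in> T" "f \<subseteq> t" "s = t - {u}" by blast
        then have "u \<in> t" using uf by blast
        then have "s \<in> vlink3 T u" unfolding vlink3_def using t by blast
        moreover have "e \<subseteq> s" unfolding e_def using t by blast
        ultimately show "s \<in> {s\<in>vlink3 T u. e \<subseteq> s}" by blast
      qed
      show "{s\<in>vlink3 T u. e \<subseteq> s} \<subseteq> (\<lambda>t. t - {u}) ` {t\<in>T. f \<subseteq> t}"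
      proof
        fix s assume s: "s \<in> {s\<in>vlink3 T u. e \<subseteq> s}"
        then obtain t where t: "t \<in> T" "u \<in> t" "s = t - {u}" unfolding vlink3_def by blast
        have "e \<subseteq> s" using s by blast
        then have "f \<subseteq> t" unfolding e_def using uf t by blast
        then show "s \<in> (\<lambda>t. t - {u}) ` {t\<in>T. f \<subseteq> t}" using t by blast
      qed
    qed
  qed
  then show ?thesis using c2 bij_betw_same_card by metis
qed

lemma triple_set:
  assumes "prec a b" "prec b c" "prec a c" and asy: "\<And>u w. prec u w \<Longrightarrow> \<not> prec w u"
  shows "{(x,y,z). x \<in> {a,b,c} \<and> y \<in> {a,b,c} \<and> z \<in> {a,b,c} \<and> prec x y \<and> prec y z} = {(a,b,c)}"
proof -
  have n: "\<not> prec a a" "\<not> prec b b" "\<not> prec c c" "\<not> prec b a" "\<not> prec c b" "\<not> prec c a"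
    using assms(1-3) asy by blast+
  show ?thesis using assms(1-3) n by auto
qed

lemma fin_T:
  assumes cl: "closed_3mfd_triangulation T"
  shows "finite T" "finite (\<Union>T)" "finite (ctris T)"
proof -
  show ft: "finite T" using cl unfolding closed_3mfd_triangulation_def by blast
  have "\<forall>t\<in>T. finite t" using cl unfolding closed_3mfd_triangulation_def
    by (metis card.infinite zero_neq_numeral)
  then show fu: "finite (\<Union>T)" using ft by blast
  have "ctris T \<subseteq> Pow (\<Union>T)" unfolding ctris_def by blast
  then show "finite (ctris T)" using fu finite_subset by blast
qed

lemma sum4:
  assumes "distinct [a,b,c,d]"
  shows "sum H {a,b,c,d} = (H a + H b + H c + H d :: 'b::comm_monoid_add)"
  using assms by (simp add: add.assoc)

lemma closed_sum:
  assumes cl: "closed_3mfd_triangulation T" and br: "branching T prec"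
  shows "(\<Sum>t\<in>T. G (vtx prec t 1) (vtx prec t 2) (vtx prec t 3) + G (vtx prec t 0) (vtx prec t 2) (vtx prec t 3)
     + G (vtx prec t 0) (vtx prec t 1) (vtx prec t 3) + G (vtx prec t 0) (vtx prec t 1) (vtx prec t 2)) = (0::bit)"
proof -
  define F where "F S = (\<Sum>(x,y,z)\<in>{(x,y,z). x \<in> S \<and> y \<in> S \<and> z \<in> S \<and> prec x y \<and> prec y z}. G x y z)" for S
  have asy: "\<And>u w. prec u w \<Longrightarrow> \<not> prec w u" using br br_asym by metis
  have F3: "F {a,b,c} = G a b c" if "prec a b" "prec b c" "prec a c" for a b c
    unfolding F_def using triple_set[OF that asy] by simp
  have c4: "\<And>t. t \<in> T \<Longrightarrow> card t = 4" using cl unfolding closed_3mfd_triangulation_def by blast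
  have step: "(\<Sum>f\<in>{f\<in>ctris T. f \<subseteq> t}. F f) = G (vtx prec t 1) (vtx prec t 2) (vtx prec t 3) + G (vtx prec t 0) (vtx prec t 2) (vtx prec t 3)
     + G (vtx prec t 0) (vtx prec t 1) (vtx prec t 3) + G (vtx prec t 0) (vtx prec t 1) (vtx prec t 2)"
    if tT: "t \<in> T" for t
  proof -
    have ct: "card t = 4" using c4 tT by blast
    have fin: "finite t" using ct by (metis card.infinite zero_neq_numeral)
    have eq: "{f\<in>ctris T. f \<subseteq> t} = (\<lambda>x. t - {x}) ` t"
    proof
      show "{f\<in>ctris T. f \<subseteq> t} \<subseteq> (\<lambda>x. t - {x}) ` t"
      proof
        fix f assume "f \<in> {f\<in>ctris T. f \<subseteq> t}"
        then have ft: "f \<subseteq> t" and cf: "card f = 3" unfolding ctris_def by auto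
        then have "card (t - f) = 1" using ct fin by (simp add: card_Diff_subset finite_subset)
        then obtain x where "t - f = {x}" using card_1_singletonE by blast
        then have "x \<in> t" "f = t - {x}" using ft by auto
        then show "f \<in> (\<lambda>x. t - {x}) ` t" by blast
      qed
      show "(\<lambda>x. t - {x}) ` t \<subseteq> {f\<in>ctris T. f \<subseteq> t}"
      proof
        fix f assume "f \<in> (\<lambda>x. t - {x}) ` t"
        then obtain x where x: "x \<in> t" "f = t - {x}" by blast
        then have "card f = 3" using ct fin by simp
        then show "f \<in> {f\<in>ctris T. f \<subseteq> t}" unfolding ctris_def using x tT by blast
      qed
    qed
    have inj: "inj_on (\<lambda>x. t - {x}) t" unfolding inj_on_def by blast
    have "(\<Sum>f\<in>{f\<in>ctris T. f \<subseteq> t}. F f) = (\<Sum>x\<in>t. F (t - {x}))"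
      unfolding eq using sum.reindex[OF inj] by simp
    also have "\<dots> = G (vtx prec t 1) (vtx prec t 2) (vtx prec t 3) + G (vtx prec t 0) (vtx prec t 2) (vtx prec t 3)
     + G (vtx prec t 0) (vtx prec t 1) (vtx prec t 3) + G (vtx prec t 0) (vtx prec t 1) (vtx prec t 2)"
    proof -
      note V = vtx_chain[OF br tT ct]
      define v0 where "v0 = vtx prec t 0"
      define v1 where "v1 = vtx prec t 1"
      define v2 where "v2 = vtx prec t 2"
      define v3 where "v3 = vtx prec t 3"
      have tv: "t = {v0,v1,v2,v3}" and d: "distinct [v0,v1,v2,v3]"
        and p: "prec v0 v1" "prec v0 v2" "prec v0 v3" "prec v1 v2" "prec v1 v3" "prec v2 v3"
        using V unfolding v0_def v1_def v2_def v3_def by auto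
      have e0: "t - {v0} = {v1,v2,v3}" using tv d by auto
      have e1: "t - {v1} = {v0,v2,v3}" using tv d by auto
      have e2: "t - {v2} = {v0,v1,v3}" using tv d by auto
      have e3: "t - {v3} = {v0,v1,v2}" using tv d by auto
      have "(\<Sum>x\<in>t. F (t - {x})) = (\<Sum>x\<in>{v0,v1,v2,v3}. F (t - {x}))"
        by (simp only: tv[symmetric])
      also have "\<dots> = F (t - {v0}) + F (t - {v1}) + F (t - {v2}) + F (t - {v3})"
        by (rule sum4[OF d])
      also have "\<dots> = G v1 v2 v3 + G v0 v2 v3 + G v0 v1 v3 + G v0 v1 v2"
        unfolding e0 e1 e2 e3
        by (simp only: F3[OF p(4) p(6) p(5)] F3[OF p(2) p(6) p(3)] F3[OF p(1) p(5) p(3)] F3[OF p(1) p(4) p(2)])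
      finally show ?thesis unfolding v0_def v1_def v2_def v3_def .
    qed
    finally show ?thesis .
  qed
  have "(\<Sum>t\<in>T. G (vtx prec t 1) (vtx prec t 2) (vtx prec t 3) + G (vtx prec t 0) (vtx prec t 2) (vtx prec t 3)
     + G (vtx prec t 0) (vtx prec t 1) (vtx prec t 3) + G (vtx prec t 0) (vtx prec t 1) (vtx prec t 2))
     = (\<Sum>t\<in>T. \<Sum>f\<in>{f. f \<in> ctris T \<and> f \<subseteq> t}. F f)"
    by (intro sum.cong refl) (rule step[symmetric])
  also have "\<dots> = (\<Sum>f\<in>ctris T. \<Sum>t\<in>{t. t \<in> T \<and> f \<subseteq> t}. F f)"
    by (rule sum.swap_restrict) (use fin_T[OF cl] in auto)
  also have "\<dots> = (\<Sum>f\<in>ctris T. 0)"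
  proof (rule sum.cong)
    fix f assume "f \<in> ctris T"
    then have "card {t\<in>T. f \<subseteq> t} = 2" using tri_two[OF cl] by blast
    then show "(\<Sum>t\<in>{t. t \<in> T \<and> f \<subseteq> t}. F f) = 0" by simp
  qed simp
  finally show ?thesis by simp
qed


lemma bitE: "((x::bit) = 0 \<Longrightarrow> P) \<Longrightarrow> (x = 1 \<Longrightarrow> P) \<Longrightarrow> P"
  by (metis bit_not_zero_iff)

lemma bit_eq3: "((a::bit)+b+c = 0) = (c = a+b)"
  by (rule bitE[of a]; rule bitE[of b]; rule bitE[of c]; simp)

lemma card3_distinct: "distinct [x,y,z] \<Longrightarrow> card {x,y,z} = 3" by simp
lemma card2_distinct: "x \<noteq> y \<Longrightarrow> card {x,y} = 2" by simp

lemma tet_facts: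
  assumes cl: "closed_3mfd_triangulation T" and br: "branching T prec" and tT: "t \<in> T"
  defines "o0 \<equiv> vtx prec t 0" and "o1 \<equiv> vtx prec t 1" and "o2 \<equiv> vtx prec t 2" and "o3 \<equiv> vtx prec t 3"
  shows "distinct [o0,o1,o2,o3]"
    "{o0,o1} \<in> cedges T" "{o1,o2} \<in> cedges T" "{o2,o3} \<in> cedges T"
    "{o0,o1,o2} \<in> ctris T" "{o0,o1,o3} \<in> ctris T" "{o0,o2,o3} \<in> ctris T" "{o1,o2,o3} \<in> ctris T"
proof -
  have c4: "card t = 4" using cl tT unfolding closed_3mfd_triangulation_def by blast
  note V = vtx_chain[OF br tT c4]
  have tv: "t = {o0,o1,o2,o3}" and d: "distinct [o0,o1,o2,o3]"
    using V unfolding o0_def o1_def o2_def o3_def by auto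
  show "distinct [o0,o1,o2,o3]" by (rule d)
  have E: "{u,w} \<in> cedges T" if "u \<in> t" "w \<in> t" "u \<noteq> w" for u w
    unfolding cedges_def using that tT card2_distinct[OF that(3)] by blast
  have F: "{u,v,w} \<in> ctris T" if "u \<in> t" "v \<in> t" "w \<in> t" "distinct [u,v,w]" for u v w
  proof -
    have "{u,v,w} \<subseteq> t" using that by blast
    then show ?thesis unfolding ctris_def using tT card3_distinct[OF that(4)] by blast
  qed
  have m: "o0 \<in> t" "o1 \<in> t" "o2 \<in> t" "o3 \<in> t" using tv by auto
  show "{o0,o1} \<in> cedges T" "{o1,o2} \<in> cedges T" "{o2,o3} \<in> cedges T"
    using E m d by auto
  show "{o0,o1,o2} \<in> ctris T" "{o0,o1,o3} \<in> ctris T" "{o0,o2,o3} \<in> ctris T" "{o1,o2,o3} \<in> ctris T"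
    using F m d by auto
qed

lemma cocyc_tri:
  assumes "cocycle1 T b" "{x,y,z} \<in> ctris T" "distinct [x,y,z]"
  shows "b {x,z} = b {x,y} + b {y,z}"
proof -
  have be: "bdry_edges {x,y,z} = {{x,y},{y,z},{x,z}}"
  proof
    show "bdry_edges {x,y,z} \<subseteq> {{x,y},{y,z},{x,z}}"
    proof
      fix e assume "e \<in> bdry_edges {x,y,z}"
      then have "e \<subseteq> {x,y,z}" "card e = 2" unfolding bdry_edges_def by auto
      then obtain p q where "e = {p,q}" "p \<noteq> q" by (meson card_2_iff)
      then show "e \<in> {{x,y},{y,z},{x,z}}" using \<open>e \<subseteq> {x,y,z}\<close> by (auto simp: insert_commute)
    qed
    show "{{x,y},{y,z},{x,z}} \<subseteq> bdry_edges {x,y,z}"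
      unfolding bdry_edges_def using assms(3) by auto
  qed
  have "(\<Sum>e\<in>bdry_edges {x,y,z}. b e) = 0" using assms(1,2) unfolding cocycle1_def by blast
  moreover have "(\<Sum>e\<in>{{x,y},{y,z},{x,z}}. b e) = b {x,y} + b {y,z} + b {x,z}"
  proof -
    have "{x,y} \<noteq> {y,z}" "{x,y} \<noteq> {x,z}" "{y,z} \<noteq> {x,z}" using assms(3) by (auto simp: doubleton_eq_iff)
    then show ?thesis by (simp add: add.assoc del: add_bit_eq_xor)
  qed
  ultimately have "b {x,y} + b {y,z} + b {x,z} = 0" using be by simp
  then show ?thesis using bit_eq3 by blast
qed

lemma id1: "(X + (g0 + g1)) * b12 * c23 = X * b12 * c23 + (g1 * b12 * c23 + g0 * (b01 + b12) * c23 + g0 * b01 * (c12 + c23) + g0 * b01 * c12 :: bit)"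
  by (rule bitE[of X]; rule bitE[of g0]; rule bitE[of g1]; rule bitE[of b01]; rule bitE[of b12]; rule bitE[of c12]; rule bitE[of c23]; simp)

lemma id2: "a01 * (X + (g1 + g2)) * c23 = a01 * X * c23 + (a12 * g2 * c23 + (a01 + a12) * g2 * c23 + a01 * g1 * (c12 + c23) + a01 * g1 * c12 :: bit)"
  by (rule bitE[of X]; rule bitE[of g1]; rule bitE[of g2]; rule bitE[of a01]; rule bitE[of a12]; rule bitE[of c12]; rule bitE[of c23]; simp)

lemma id3: "a01 * b12 * (X + (g2 + g3)) = a01 * b12 * X + (a12 * b23 * g3 + (a01 + a12) * b23 * g3 + a01 * (b12 + b23) * g3 + a01 * b12 * g2 :: bit)"
  by (rule bitE[of X]; rule bitE[of g2]; rule bitE[of g3]; rule bitE[of a01]; rule bitE[of a12]; rule bitE[of b12]; rule bitE[of b23]; simp)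

lemma sum_pair: "p \<noteq> q \<Longrightarrow> (\<Sum>v\<in>{p,q}. g v) = g p + (g q :: bit)"
  by (simp del: add_bit_eq_xor)

lemma cup_shift:
  assumes cl: "closed_3mfd_triangulation T" and br: "branching T prec"
    and pt: "\<And>t. t \<in> T \<Longrightarrow> x' {vtx prec t 0, vtx prec t 1} * y' {vtx prec t 1, vtx prec t 2} * z' {vtx prec t 2, vtx prec t 3}
       = x {vtx prec t 0, vtx prec t 1} * y {vtx prec t 1, vtx prec t 2} * z {vtx prec t 2, vtx prec t 3}
        + (G (vtx prec t 1) (vtx prec t 2) (vtx prec t 3) + G (vtx prec t 0) (vtx prec t 2) (vtx prec t 3)
     + G (vtx prec t 0) (vtx prec t 1) (vtx prec t 3) + G (vtx prec t 0) (vtx prec t 1) (vtx prec t 2))"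
  shows "cup3_int T prec x' y' z' = cup3_int T prec x y z"
proof -
  have "cup3_int T prec x' y' z' = (\<Sum>t\<in>T. x {vtx prec t 0, vtx prec t 1} * y {vtx prec t 1, vtx prec t 2} * z {vtx prec t 2, vtx prec t 3}
        + (G (vtx prec t 1) (vtx prec t 2) (vtx prec t 3) + G (vtx prec t 0) (vtx prec t 2) (vtx prec t 3)
     + G (vtx prec t 0) (vtx prec t 1) (vtx prec t 3) + G (vtx prec t 0) (vtx prec t 1) (vtx prec t 2)))"
    unfolding cup3_int_def by (intro sum.cong refl) (rule pt)
  also have "\<dots> = cup3_int T prec x y z + 0"
    unfolding cup3_int_def by (subst sum.distrib) (subst closed_sum[OF cl br], rule refl)
  finally show ?thesis by simp
qed

lemma inv1:
  assumes cl: "closed_3mfd_triangulation T" and br: "branching T prec"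
    and cb: "cocycle1 T b" and cc: "cocycle1 T c"
    and h: "\<forall>e\<in>cedges T. x' e = x e + (\<Sum>v\<in>e. g v)"
  shows "cup3_int T prec x' b c = cup3_int T prec x b c"
proof (rule cup_shift[OF cl br, where G = "\<lambda>p q r. g p * b {p,q} * c {q,r}"])
  fix t assume tT: "t \<in> T"
  define o0 where "o0 = vtx prec t 0"
  define o1 where "o1 = vtx prec t 1"
  define o2 where "o2 = vtx prec t 2"
  define o3 where "o3 = vtx prec t 3"
  note TF = tet_facts[OF cl br tT, folded o0_def o1_def o2_def o3_def]
  have d: "distinct [o0,o1,o2,o3]" by (rule TF(1))
  have xe: "x' {o0,o1} = x {o0,o1} + (g o0 + g o1)" using h TF(2) sum_pair[of o0 o1 g] d by simp
  have b02: "b {o0,o2} = b {o0,o1} + b {o1,o2}" using cocyc_tri[OF cb TF(5)] d by simp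
  have c13: "c {o1,o3} = c {o1,o2} + c {o2,o3}" using cocyc_tri[OF cc TF(8)] d by simp
  show "x' {vtx prec t 0, vtx prec t 1} * b {vtx prec t 1, vtx prec t 2} * c {vtx prec t 2, vtx prec t 3}
       = x {vtx prec t 0, vtx prec t 1} * b {vtx prec t 1, vtx prec t 2} * c {vtx prec t 2, vtx prec t 3}
        + (g (vtx prec t 1) * b {vtx prec t 1, vtx prec t 2} * c {vtx prec t 2, vtx prec t 3}
         + g (vtx prec t 0) * b {vtx prec t 0, vtx prec t 2} * c {vtx prec t 2, vtx prec t 3}
         + g (vtx prec t 0) * b {vtx prec t 0, vtx prec t 1} * c {vtx prec t 1, vtx prec t 3}
         + g (vtx prec t 0) * b {vtx prec t 0, vtx prec t 1} * c {vtx prec t 1, vtx prec t 2})"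
    unfolding o0_def[symmetric] o1_def[symmetric] o2_def[symmetric] o3_def[symmetric]
    unfolding xe b02 c13 by (rule id1)
qed

lemma inv2:
  assumes cl: "closed_3mfd_triangulation T" and br: "branching T prec"
    and ca: "cocycle1 T a" and cc: "cocycle1 T c"
    and h: "\<forall>e\<in>cedges T. y' e = y e + (\<Sum>v\<in>e. g v)"
  shows "cup3_int T prec a y' c = cup3_int T prec a y c"
proof (rule cup_shift[OF cl br, where G = "\<lambda>p q r. a {p,q} * g q * c {q,r}"])
  fix t assume tT: "t \<in> T"
  define o0 where "o0 = vtx prec t 0"
  define o1 where "o1 = vtx prec t 1"
  define o2 where "o2 = vtx prec t 2"
  define o3 where "o3 = vtx prec t 3"
  note TF = tet_facts[OF cl br tT, folded o0_def o1_def o2_def o3_def]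
  have d: "distinct [o0,o1,o2,o3]" by (rule TF(1))
  have ye: "y' {o1,o2} = y {o1,o2} + (g o1 + g o2)" using h TF(3) sum_pair[of o1 o2 g] d by simp
  have a02: "a {o0,o2} = a {o0,o1} + a {o1,o2}" using cocyc_tri[OF ca TF(5)] d by simp
  have c13: "c {o1,o3} = c {o1,o2} + c {o2,o3}" using cocyc_tri[OF cc TF(8)] d by simp
  show "a {vtx prec t 0, vtx prec t 1} * y' {vtx prec t 1, vtx prec t 2} * c {vtx prec t 2, vtx prec t 3}
       = a {vtx prec t 0, vtx prec t 1} * y {vtx prec t 1, vtx prec t 2} * c {vtx prec t 2, vtx prec t 3}
        + (a {vtx prec t 1, vtx prec t 2} * g (vtx prec t 2) * c {vtx prec t 2, vtx prec t 3}
         + a {vtx prec t 0, vtx prec t 2} * g (vtx prec t 2) * c {vtx prec t 2, vtx prec t 3}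
         + a {vtx prec t 0, vtx prec t 1} * g (vtx prec t 1) * c {vtx prec t 1, vtx prec t 3}
         + a {vtx prec t 0, vtx prec t 1} * g (vtx prec t 1) * c {vtx prec t 1, vtx prec t 2})"
    unfolding o0_def[symmetric] o1_def[symmetric] o2_def[symmetric] o3_def[symmetric]
    unfolding ye a02 c13 by (rule id2)
qed

lemma inv3:
  assumes cl: "closed_3mfd_triangulation T" and br: "branching T prec"
    and ca: "cocycle1 T a" and cb: "cocycle1 T b"
    and h: "\<forall>e\<in>cedges T. z' e = z e + (\<Sum>v\<in>e. g v)"
  shows "cup3_int T prec a b z' = cup3_int T prec a b z"
proof (rule cup_shift[OF cl br, where G = "\<lambda>p q r. a {p,q} * b {q,r} * g r"])
  fix t assume tT: "t \<in> T"
  define o0 where "o0 = vtx prec t 0"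
  define o1 where "o1 = vtx prec t 1"
  define o2 where "o2 = vtx prec t 2"
  define o3 where "o3 = vtx prec t 3"
  note TF = tet_facts[OF cl br tT, folded o0_def o1_def o2_def o3_def]
  have d: "distinct [o0,o1,o2,o3]" by (rule TF(1))
  have ze: "z' {o2,o3} = z {o2,o3} + (g o2 + g o3)" using h TF(4) sum_pair[of o2 o3 g] d by simp
  have a02: "a {o0,o2} = a {o0,o1} + a {o1,o2}" using cocyc_tri[OF ca TF(5)] d by simp
  have b13: "b {o1,o3} = b {o1,o2} + b {o2,o3}" using cocyc_tri[OF cb TF(8)] d by simp
  show "a {vtx prec t 0, vtx prec t 1} * b {vtx prec t 1, vtx prec t 2} * z' {vtx prec t 2, vtx prec t 3}
       = a {vtx prec t 0, vtx prec t 1} * b {vtx prec t 1, vtx prec t 2} * z {vtx prec t 2, vtx prec t 3}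
        + (a {vtx prec t 1, vtx prec t 2} * b {vtx prec t 2, vtx prec t 3} * g (vtx prec t 3)
         + a {vtx prec t 0, vtx prec t 2} * b {vtx prec t 2, vtx prec t 3} * g (vtx prec t 3)
         + a {vtx prec t 0, vtx prec t 1} * b {vtx prec t 1, vtx prec t 3} * g (vtx prec t 3)
         + a {vtx prec t 0, vtx prec t 1} * b {vtx prec t 1, vtx prec t 2} * g (vtx prec t 2))"
    unfolding o0_def[symmetric] o1_def[symmetric] o2_def[symmetric] o3_def[symmetric]
    unfolding ze a02 b13 by (rule id3)
qed

declare add_bit_eq_xor[simp del] mult_bit_eq_and[simp del]

lemma sgnb_add: "sgnb (x + y) = sgnb x * sgnb y"
  unfolding sgnb_def by (rule bitE[of x]; rule bitE[of y]; simp)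

lemma sgnb_0: "sgnb 0 = 1" by (simp add: sgnb_def)

lemma sgnb_sum: "sgnb (sum f A) = (\<Prod>x\<in>A. sgnb (f x))"
proof (cases "finite A")
  case True
  then show ?thesis by (induction A rule: finite_induct) (simp_all add: sgnb_add sgnb_0)
next
  case False
  then show ?thesis by (simp add: sgnb_def)
qed

lemma sgnb_pow: "sgnb x ^ bit_nat y = sgnb (x * y)"
  unfolding sgnb_def bit_nat_def by (rule bitE[of x]; rule bitE[of y]; simp)

lemma sgnb_one: "sgnb x = 1 \<longleftrightarrow> x = 0"
  unfolding sgnb_def by (rule bitE[of x]; simp)

lemma swap3: "(\<Sum>t\<in>T. \<Sum>x\<in>A. \<Sum>y\<in>B. \<Sum>z\<in>C. H t x y z) = (\<Sum>x\<in>A. \<Sum>y\<in>B. \<Sum>z\<in>C. \<Sum>t\<in>T. (H t x y z :: 'b::comm_monoid_add))"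
proof -
  have "(\<Sum>t\<in>T. \<Sum>x\<in>A. \<Sum>y\<in>B. \<Sum>z\<in>C. H t x y z) = (\<Sum>x\<in>A. \<Sum>t\<in>T. \<Sum>y\<in>B. \<Sum>z\<in>C. H t x y z)"
    by (rule sum.swap)
  also have "\<dots> = (\<Sum>x\<in>A. \<Sum>y\<in>B. \<Sum>t\<in>T. \<Sum>z\<in>C. H t x y z)"
    by (intro sum.cong refl sum.swap)
  also have "\<dots> = (\<Sum>x\<in>A. \<Sum>y\<in>B. \<Sum>z\<in>C. \<Sum>t\<in>T. H t x y z)"
    by (intro sum.cong refl sum.swap)
  finally show ?thesis .
qed

lemma lincomb_cocycle:
  assumes "coh_basis T B"
  shows "cocycle1 T (lincomb B n)"
proof -
  have cb: "\<forall>\<alpha>\<in>B. cocycle1 T \<alpha>" using assms unfolding coh_basis_def by blast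
  have "is_cochain1 T (lincomb B n)"
    unfolding is_cochain1_def lincomb_def
  proof (intro allI impI)
    fix e assume "e \<notin> cedges T"
    then have "\<forall>\<alpha>\<in>B. \<alpha> e = 0" using cb unfolding cocycle1_def is_cochain1_def by blast
    then have "\<forall>\<alpha>\<in>B. n \<alpha> * \<alpha> e = 0" by simp
    then show "(\<Sum>\<alpha>\<in>B. n \<alpha> * \<alpha> e) = 0" by (rule sum.neutral)
  qed
  moreover have "(\<Sum>e\<in>bdry_edges f. lincomb B n e) = 0" if "f \<in> ctris T" for f
  proof -
    have "(\<Sum>e\<in>bdry_edges f. lincomb B n e) = (\<Sum>\<alpha>\<in>B. n \<alpha> * (\<Sum>e\<in>bdry_edges f. \<alpha> e))"
      unfolding lincomb_def by (simp add: sum_distrib_left) (rule sum.swap)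
    also have "\<dots> = 0" using cb that unfolding cocycle1_def by simp
    finally show ?thesis .
  qed
  ultimately show ?thesis unfolding cocycle1_def by blast
qed

lemma prod3: "(\<Sum>\<alpha>\<in>A. X \<alpha>) * (\<Sum>\<beta>\<in>A. Y \<beta>) * (\<Sum>\<gamma>\<in>A. Z \<gamma>) = (\<Sum>\<alpha>\<in>A. \<Sum>\<beta>\<in>A. \<Sum>\<gamma>\<in>A. X \<alpha> * Y \<beta> * (Z \<gamma> :: 'b::comm_semiring_0))"
  apply (simp only: mult.assoc sum_distrib_right)
  apply (simp only: sum_distrib_left)
  done

lemma cup_trilinear:
  "cup3_int T prec (lincomb B n) (lincomb B m) (lincomb B l)
    = (\<Sum>\<alpha>\<in>B. \<Sum>\<beta>\<in>B. \<Sum>\<gamma>\<in>B. n \<alpha> * m \<beta> * l \<gamma> * cup3_int T prec \<alpha> \<beta> \<gamma>)"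
proof -
  have "cup3_int T prec (lincomb B n) (lincomb B m) (lincomb B l)
     = (\<Sum>t\<in>T. \<Sum>\<alpha>\<in>B. \<Sum>\<beta>\<in>B. \<Sum>\<gamma>\<in>B. (n \<alpha> * \<alpha> {vtx prec t 0, vtx prec t 1}) * (m \<beta> * \<beta> {vtx prec t 1, vtx prec t 2}) * (l \<gamma> * \<gamma> {vtx prec t 2, vtx prec t 3}))"
    unfolding cup3_int_def lincomb_def prod3 ..
  also have "\<dots> = (\<Sum>t\<in>T. \<Sum>\<alpha>\<in>B. \<Sum>\<beta>\<in>B. \<Sum>\<gamma>\<in>B. (n \<alpha> * m \<beta> * l \<gamma>) * (\<alpha> {vtx prec t 0, vtx prec t 1} * \<beta> {vtx prec t 1, vtx prec t 2} * \<gamma> {vtx prec t 2, vtx prec t 3}))"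
    by (intro sum.cong refl) (simp only: mult_ac)
  also have "\<dots> = (\<Sum>\<alpha>\<in>B. \<Sum>\<beta>\<in>B. \<Sum>\<gamma>\<in>B. \<Sum>t\<in>T. (n \<alpha> * m \<beta> * l \<gamma>) * (\<alpha> {vtx prec t 0, vtx prec t 1} * \<beta> {vtx prec t 1, vtx prec t 2} * \<gamma> {vtx prec t 2, vtx prec t 3}))"
    by (rule swap3)
  also have "\<dots> = (\<Sum>\<alpha>\<in>B. \<Sum>\<beta>\<in>B. \<Sum>\<gamma>\<in>B. n \<alpha> * m \<beta> * l \<gamma> * cup3_int T prec \<alpha> \<beta> \<gamma>)"
    unfolding cup3_int_def by (simp only: sum_distrib_left)
  finally show ?thesis .
qed

lemma code_valid:
  assumes "\<psi> \<in> code_space T" "\<psi> a \<noteq> 0"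
  shows "valid_cfg T a"
  using assms unfolding code_space_def hilb_def by blast

lemma code_cocycle:
  assumes "\<psi> \<in> code_space T" "\<psi> a \<noteq> 0" "i \<in> {1,2,3}"
  shows "cocycle1 T (a i)"
proof -
  have v: "valid_cfg T a" using code_valid assms by blast
  have "is_cochain1 T (a i)" using v unfolding valid_cfg_def is_cochain1_def by blast
  moreover have "(\<Sum>e\<in>bdry_edges f. a i e) = 0" if "f \<in> ctris T" for f
  proof -
    have "Zstab i f \<psi> = \<psi>" using assms(1,3) that unfolding code_space_def by blast
    then have "sgnb (\<Sum>e\<in>bdry_edges f. a i e) * \<psi> a = \<psi> a" unfolding Zstab_def by metis
    then have "sgnb (\<Sum>e\<in>bdry_edges f. a i e) = 1" using assms(2) by simp
    then show ?thesis using sgnb_one by blast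
  qed
  ultimately show ?thesis unfolding cocycle1_def by blast
qed

lemma bit_sub: "((c::bit) - d = s) = (c = d + s)"
  by (rule bitE[of c]; rule bitE[of d]; rule bitE[of s]; simp)

lemma coh_shift:
  assumes "cohomologous T c d"
  shows "\<exists>g. \<forall>e\<in>cedges T. c e = d e + (\<Sum>v\<in>e. g v)"
proof -
  obtain g where g: "\<forall>e\<in>cedges T. c e - d e = (\<Sum>v\<in>e. g v)" using assms unfolding cohomologous_def by blast
  have "\<forall>e\<in>cedges T. c e = d e + (\<Sum>v\<in>e. g v)"
  proof
    fix e assume "e \<in> cedges T"
    then have "c e - d e = (\<Sum>v\<in>e. g v)" using g by blast
    then show "c e = d e + (\<Sum>v\<in>e. g v)" using bit_sub by blast
  qed
  then show ?thesis by blast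
qed


lemma U_eq: "U_circ T prec \<psi> = (\<lambda>a. sgnb (cup3_int T prec (a 1) (a 2) (a 3)) * \<psi> a)"
  unfolding U_circ_def cup3_int_def sgnb_sum ..

lemma shift_sum:
  assumes "e \<in> cedges T"
  shows "(if e \<in> cedges T \<and> v \<in> e then c + 1 else c) = c + (\<Sum>w\<in>e. (\<lambda>w. if w = v then (1::bit) else 0) w)"
proof -
  have "finite e" using assms unfolding cedges_def by (auto intro: card_ge_0_finite)
  then have "(\<Sum>w\<in>e. (\<lambda>w. if w = v then (1::bit) else 0) w) = (if v \<in> e then 1 else 0)"
    by (simp add: sum.delta')
  then show ?thesis using assms by simp
qed

lemma phase_inv_X:
  fixes a :: "'v cfg" and v :: 'v and T :: "'v set set"
  assumes cl: "closed_3mfd_triangulation T" and br: "branching T prec"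
    and c1: "cocycle1 T (a 1)" and c2: "cocycle1 T (a 2)" and c3: "cocycle1 T (a 3)"
    and i: "i \<in> {1,2,3}"
  defines "a' \<equiv> a(i := (\<lambda>e. if e \<in> cedges T \<and> v \<in> e then a i e + 1 else a i e))"
  shows "cup3_int T prec (a' 1) (a' 2) (a' 3) = cup3_int T prec (a 1) (a 2) (a 3)"
proof -
  define g where "g = (\<lambda>w. if w = v then (1::bit) else 0)"
  have h: "\<forall>e\<in>cedges T. a' i e = a i e + (\<Sum>w\<in>e. g w)"
  proof
    fix e assume e: "e \<in> cedges T"
    have "a' i e = (if e \<in> cedges T \<and> v \<in> e then a i e + 1 else a i e)" unfolding a'_def by simp
    also have "\<dots> = a i e + (\<Sum>w\<in>e. g w)" unfolding g_def by (rule shift_sum[OF e])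
    finally show "a' i e = a i e + (\<Sum>w\<in>e. g w)" .
  qed
  consider "i = 1" | "i = 2" | "i = 3" using i by blast
  then show ?thesis
  proof cases
    case 1
    then have "a' 2 = a 2" "a' 3 = a 3" unfolding a'_def by auto
    then show ?thesis using inv1[OF cl br c2 c3, of "a' 1" "a 1" g] h 1 by simp
  next
    case 2
    then have "a' 1 = a 1" "a' 3 = a 3" unfolding a'_def by auto
    then show ?thesis using inv2[OF cl br c1 c3, of "a' 2" "a 2" g] h 2 by simp
  next
    case 3
    then have "a' 1 = a 1" "a' 2 = a 2" unfolding a'_def by auto
    then show ?thesis using inv3[OF cl br c1 c2, of "a' 3" "a 3" g] h 3 by simp
  qed
qed

lemma part1:
  assumes cl: "closed_3mfd_triangulation T" and br: "branching T prec" and psi: "\<psi> \<in> code_space T"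
  shows "U_circ T prec \<psi> \<in> code_space T"
proof -
  let ?U = "U_circ T prec \<psi>"
  have "\<forall>a. \<not> valid_cfg T a \<longrightarrow> \<psi> a = 0" using psi unfolding code_space_def hilb_def by blast
  then have hil: "?U \<in> hilb T"
    unfolding hilb_def U_eq by simp
  have X: "Xstab T i v ?U = ?U" if iv: "i \<in> {1,2,3}" "v \<in> \<Union>T" for i v
  proof
    fix a
    define a' where "a' = a(i := (\<lambda>e. if e \<in> cedges T \<and> v \<in> e then a i e + (1::bit) else a i e))"
    have "Xstab T i v \<psi> = \<psi>" using psi iv unfolding code_space_def by blast
    then have "Xstab T i v \<psi> a = \<psi> a" by simp
    moreover have "Xstab T i v \<psi> a = \<psi> a'" unfolding Xstab_def a'_def by (rule refl)
    ultimately have pa: "\<psi> a' = \<psi> a" by simp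
    have lhs: "Xstab T i v ?U a = sgnb (cup3_int T prec (a' 1) (a' 2) (a' 3)) * \<psi> a'"
      unfolding Xstab_def U_eq a'_def by (rule refl)
    from lhs have lhs2: "Xstab T i v ?U a = sgnb (cup3_int T prec (a' 1) (a' 2) (a' 3)) * \<psi> a"
      by (simp only: pa)
    show "Xstab T i v ?U a = ?U a"
    proof (cases "\<psi> a = 0")
      case True
      have "?U a = 0" unfolding U_eq using True by simp
      then show ?thesis unfolding lhs2 using True by simp
    next
      case False
      have cs: "cocycle1 T (a 1)" "cocycle1 T (a 2)" "cocycle1 T (a 3)"
        using code_cocycle[OF psi False] by auto
      have "cup3_int T prec (a' 1) (a' 2) (a' 3) = cup3_int T prec (a 1) (a 2) (a 3)"
        unfolding a'_def by (rule phase_inv_X[OF cl br cs iv(1)])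
      then have "Xstab T i v ?U a = sgnb (cup3_int T prec (a 1) (a 2) (a 3)) * \<psi> a"
        unfolding lhs2 by simp
      then show ?thesis unfolding U_eq .
    qed
  qed
  have Z: "Zstab i f ?U = ?U" if iv: "i \<in> {1,2,3}" "f \<in> ctris T" for i f
  proof
    fix a
    have "Zstab i f \<psi> = \<psi>" using psi iv unfolding code_space_def by blast
    then have "Zstab i f \<psi> a = \<psi> a" by simp
    moreover have "Zstab i f \<psi> a = sgnb (\<Sum>e\<in>bdry_edges f. a i e) * \<psi> a" unfolding Zstab_def by (rule refl)
    ultimately have z: "sgnb (\<Sum>e\<in>bdry_edges f. a i e) * \<psi> a = \<psi> a" by simp
    have "Zstab i f ?U a = sgnb (\<Sum>e\<in>bdry_edges f. a i e) * (sgnb (cup3_int T prec (a 1) (a 2) (a 3)) * \<psi> a)"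
      unfolding Zstab_def U_eq by (rule refl)
    also have "\<dots> = sgnb (cup3_int T prec (a 1) (a 2) (a 3)) * (sgnb (\<Sum>e\<in>bdry_edges f. a i e) * \<psi> a)"
      by (rule mult.left_commute)
    also have "\<dots> = ?U a" unfolding z U_eq by (rule refl)
    finally show "Zstab i f ?U a = ?U a" .
  qed
  show ?thesis unfolding code_space_def using hil X Z by blast
qed

lemma part2:
  assumes cl: "closed_3mfd_triangulation T" and br: "branching T prec" and cb: "coh_basis T B"
    and psi: "\<psi> \<in> code_space T"
  shows "U_circ T prec \<psi> = logical_product T prec B \<psi>"
proof
  fix a
  show "U_circ T prec \<psi> a = logical_product T prec B \<psi> a"
  proof (cases "\<psi> a = 0")
    case True
    then show ?thesis unfolding U_eq logical_product_def by simp
  next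
    case False
    have cs: "cocycle1 T (a 1)" "cocycle1 T (a 2)" "cocycle1 T (a 3)"
      using code_cocycle[OF psi False] by auto
    define P where "P c n \<longleftrightarrow> (\<forall>x. x \<notin> B \<longrightarrow> n x = 0) \<and> cohomologous T c (lincomb B n)" for c n
    define N where "N i = (THE n. P (a i) n)" for i :: nat
    have ex: "\<exists>!n. P (a i) n" if "cocycle1 T (a i)" for i
      using cb that unfolding coh_basis_def P_def by blast
    have PN: "P (a i) (N i)" if "cocycle1 T (a i)" for i
      unfolding N_def using theI'[OF ex[OF that]] .
    have co: "coeff T B (a i) = N i" for i
      unfolding coeff_def[abs_def] N_def P_def ..
    obtain g1 where g1: "\<forall>e\<in>cedges T. a 1 e = lincomb B (N 1) e + (\<Sum>v\<in>e. g1 v)"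
      using coh_shift PN[OF cs(1)] unfolding P_def by blast
    obtain g2 where g2: "\<forall>e\<in>cedges T. a 2 e = lincomb B (N 2) e + (\<Sum>v\<in>e. g2 v)"
      using coh_shift PN[OF cs(2)] unfolding P_def by blast
    obtain g3 where g3: "\<forall>e\<in>cedges T. a 3 e = lincomb B (N 3) e + (\<Sum>v\<in>e. g3 v)"
      using coh_shift PN[OF cs(3)] unfolding P_def by blast
    have L: "cocycle1 T (lincomb B (N i))" for i using lincomb_cocycle[OF cb] .
    have "cup3_int T prec (a 1) (a 2) (a 3) = cup3_int T prec (lincomb B (N 1)) (a 2) (a 3)"
      by (rule inv1[OF cl br cs(2) cs(3) g1])
    also have "\<dots> = cup3_int T prec (lincomb B (N 1)) (lincomb B (N 2)) (a 3)"
      by (rule inv2[OF cl br L cs(3) g2])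
    also have "\<dots> = cup3_int T prec (lincomb B (N 1)) (lincomb B (N 2)) (lincomb B (N 3))"
      by (rule inv3[OF cl br L L g3])
    also have "\<dots> = (\<Sum>\<alpha>\<in>B. \<Sum>\<beta>\<in>B. \<Sum>\<gamma>\<in>B. N 1 \<alpha> * N 2 \<beta> * N 3 \<gamma> * cup3_int T prec \<alpha> \<beta> \<gamma>)"
      by (rule cup_trilinear)
    finally have cupeq: "cup3_int T prec (a 1) (a 2) (a 3) = (\<Sum>\<alpha>\<in>B. \<Sum>\<beta>\<in>B. \<Sum>\<gamma>\<in>B. N 1 \<alpha> * N 2 \<beta> * N 3 \<gamma> * cup3_int T prec \<alpha> \<beta> \<gamma>)" .
    show ?thesis
      unfolding U_eq logical_product_def logical_CCZ_phase_def co sgnb_pow cupeq sgnb_sum ..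
  qed
qed

theorem mainTheorem2:
  fixes T :: "'v set set" and prec :: "'v \<Rightarrow> 'v \<Rightarrow> bool" and B :: "'v cochain1 set"
  assumes "closed_3mfd_triangulation T"
    and "branching T prec"
    and "coh_basis T B"
  shows "(\<forall>\<psi>\<in>code_space T. U_circ T prec \<psi> \<in> code_space T)
       \<and> (\<forall>\<psi>\<in>code_space T. U_circ T prec \<psi> = logical_product T prec B \<psi>)"
  using part1[OF assms(1,2)] part2[OF assms] by blast

end
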